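(* For every integer $k\ge1$, let $W_k(x)=\sum_{n\ge1}w_{n,k}x^n$, where $w_{n,k}$ is the number of un-ordered rooted binary trees $t$ with $n$ leaves and $\gamma(t)\le k$. Then $$W_k(x)=x+\frac12W_k(x)^2+\frac12W_k(x^2)-x^{k+1},$$ and hence $$W_k(x)=1-\sqrt{1-2\varphi_k(x)},\qquad \varphi_k(x)=x+\frac{W_k(x^2)}{2}-x^{k+1}.$$
   Context: An un-ordered rooted binary tree is a rooted tree in which every internal node has exactly two children, with no order on the children (trees are considered up to isomorphism); its size is its number of leaves. A tree is a caterpillar if every node is either a leaf or has at least one leaf among its direct children. The subtree of $t$ at a node $v$ consists of $v$ and all its descendants, and $\gamma(t)$ is the largest number of leaves of a caterpillar occurring as the subtree of $t$ at some node. *)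

theory Defs
  imports Complex_Main "HOL-Computational_Algebra.Formal_Power_Series"
begin

text \<open>Rooted binary trees with ordered children; un-ordered trees are the
  classes modulo the isomorphism relation \<open>btree_iso\<close> (swapping children).\<close>
datatype btree = Leaf | Node btree btree

fun leaves :: "btree \<Rightarrow> nat" where
  "leaves Leaf = 1"
| "leaves (Node a b) = leaves a + leaves b"

fun btree_iso :: "btree \<Rightarrow> btree \<Rightarrow> bool" where
  "btree_iso Leaf Leaf = True"
| "btree_iso (Node a b) (Node c d) =
     ((btree_iso a c \<and> btree_iso b d) \<or> (btree_iso a d \<and> btree_iso b c))"
| "btree_iso _ _ = False"

definition iso_rel :: "(btree \<times> btree) set" where
  "iso_rel = {(s, t). btree_iso s t}"

fun caterpillar :: "btree \<Rightarrow> bool" where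
  "caterpillar Leaf = True"
| "caterpillar (Node a b) = ((a = Leaf \<or> b = Leaf) \<and> caterpillar a \<and> caterpillar b)"

fun subtrees :: "btree \<Rightarrow> btree set" where
  "subtrees Leaf = {Leaf}"
| "subtrees (Node a b) = insert (Node a b) (subtrees a \<union> subtrees b)"

definition gamma :: "btree \<Rightarrow> nat" where
  "gamma t = Max (leaves ` {s \<in> subtrees t. caterpillar s})"

definition w :: "nat \<Rightarrow> nat \<Rightarrow> nat" where
  "w n k = card ({t. leaves t = n \<and> gamma t \<le> k} // iso_rel)"

definition W :: "nat \<Rightarrow> real fps" where
  "W k = Abs_fps (\<lambda>n. real (w n k))"

definition phi :: "nat \<Rightarrow> real fps" where
  "phi k = fps_X + fps_compose (W k) (fps_X ^ 2) / 2 - fps_X ^ (k + 1)"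

end

theory Submission imports Defs "HOL-Library.Countable" begin

instance btree :: countable by countable_datatype

fun canon :: "btree \<Rightarrow> btree" where
  "canon Leaf = Leaf"
| "canon (Node a b) = (let a' = canon a; b' = canon b in
     if to_nat a' \<le> to_nat b' then Node a' b' else Node b' a')"

fun canonical :: "btree \<Rightarrow> bool" where
  "canonical Leaf = True"
| "canonical (Node a b) = (canonical a \<and> canonical b \<and> to_nat a \<le> to_nat b)"

lemma canon_canonical: "canonical (canon t)"
  by (induction t) (auto simp: Let_def)

lemma canonical_canon: "canonical t \<Longrightarrow> canon t = t"
  by (induction t) (auto simp: Let_def)

lemma leaves_pos: "leaves t \<ge> 1"
  by (induction t) auto

lemma leaves_canon: "leaves (canon t) = leaves t"
  by (induction t) (auto simp: Let_def)

lemma canon_Leaf_iff: "canon t = Leaf \<longleftrightarrow> t = Leaf"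
  by (cases t) (auto simp: Let_def)

lemma caterpillar_canon: "caterpillar (canon t) = caterpillar t"
  by (induction t) (auto simp: Let_def canon_Leaf_iff)

lemma iso_canon1: "btree_iso s t \<Longrightarrow> canon s = canon t"
proof (induction s t rule: btree_iso.induct)
  case (2 a b c d)
  then show ?case by (auto simp: Let_def split: if_splits)
qed auto

lemma canon_Node_eq: "canon (Node a b) = canon (Node c d) \<Longrightarrow>
   (canon a = canon c \<and> canon b = canon d) \<or> (canon a = canon d \<and> canon b = canon c)"
  by (simp add: Let_def split: if_splits)

lemma canon_Node_Leaf: "canon (Node a b) \<noteq> Leaf"
  by (simp add: Let_def)

lemma iso_canon2: "canon s = canon t \<Longrightarrow> btree_iso s t"
proof (induction s arbitrary: t)
  case Leaf
  show ?case
  proof (cases t)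
    case (Node c d)
    then have False using Leaf canon_Node_Leaf by (metis canon.simps(1))
    then show ?thesis ..
  qed simp
next
  case (Node a b)
  show ?case
  proof (cases t)
    case Leaf
    then show ?thesis using Node.prems canon_Node_Leaf by simp
  next
    case (Node c d)
    then have "(canon a = canon c \<and> canon b = canon d) \<or> (canon a = canon d \<and> canon b = canon c)"
      using Node.prems canon_Node_eq by simp
    then show ?thesis using Node.IH Node by auto
  qed
qed

lemma iso_iff: "btree_iso s t \<longleftrightarrow> canon s = canon t"
  using iso_canon1 iso_canon2 by blast

fun g :: "btree \<Rightarrow> nat" where
  "g Leaf = 1"
| "g (Node a b) = max (max (g a) (g b)) (if caterpillar (Node a b) then leaves a + leaves b else 0)"

lemma finite_subtrees: "finite (subtrees t)"
  by (induction t) auto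

lemma Leaf_subtrees: "Leaf \<in> subtrees t"
  by (induction t) auto

lemma gamma_g: "gamma t = g t"
proof (induction t)
  case Leaf
  then show ?case by (simp add: gamma_def)
next
  case (Node a b)
  let ?S = "\<lambda>t. leaves ` {s \<in> subtrees t. caterpillar s}"
  have fin: "finite (?S t)" for t using finite_subtrees by auto
  have ne: "?S t \<noteq> {}" for t using Leaf_subtrees[of t] by force
  have eq0: "{s \<in> subtrees (Node a b). caterpillar s} = (if caterpillar (Node a b) then {Node a b} else {}) \<union>
     ({s \<in> subtrees a. caterpillar s} \<union> {s \<in> subtrees b. caterpillar s})"
    by (auto simp del: caterpillar.simps)
  have eq: "?S (Node a b) = (if caterpillar (Node a b) then {leaves a + leaves b} else {}) \<union> (?S a \<union> ?S b)"
    unfolding eq0 image_Un by (simp del: caterpillar.simps)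
  have "gamma (Node a b) = Max ((if caterpillar (Node a b) then {leaves a + leaves b} else {}) \<union> (?S a \<union> ?S b))"
    unfolding gamma_def using eq by simp
  also have "\<dots> = max (if caterpillar (Node a b) then leaves a + leaves b else 0) (max (Max (?S a)) (Max (?S b)))"
    using fin ne by (simp add: Max_Un Max_insert del: caterpillar.simps)
  also have "\<dots> = g (Node a b)" using Node by (simp add: gamma_def max.commute max.left_commute max.assoc del: caterpillar.simps)
  finally show ?case .
qed

lemma g_canon: "g (canon t) = g t"
  by (induction t) (auto simp: Let_def caterpillar_canon canon_Leaf_iff leaves_canon)

lemma g_le_leaves: "g t \<le> leaves t"
  by (induction t) auto

lemma g_cat: "caterpillar t \<Longrightarrow> g t = leaves t"
  by (induction t) auto

lemma finite_leaves: "finite {t. leaves t = n}"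
proof (induction n rule: less_induct)
  case (less n)
  let ?U = "\<Union>i\<in>{1..<n}. case_prod Node ` ({t. leaves t = i} \<times> {t. leaves t = n - i})"
  have sub: "{t. leaves t = n} \<subseteq> insert Leaf ?U"
  proof
    fix t assume t: "t \<in> {t. leaves t = n}"
    show "t \<in> insert Leaf ?U"
    proof (cases t)
      case (Node a b)
      with t have "leaves a < n" "leaves b = n - leaves a" "leaves a \<ge> 1"
        using leaves_pos[of b] leaves_pos[of a] by auto
      then have "leaves a \<in> {1..<n}" "(a, b) \<in> {t. leaves t = leaves a} \<times> {t. leaves t = n - leaves a}"
        by auto
      then show ?thesis using Node by blast
    qed auto
  qed
  have "finite ?U"
  proof (rule finite_UN_I)
    show "finite {1..<n}" by simp
    fix i assume "i \<in> {1..<n}"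
    then have "i < n" "n - i < n" by auto
    then show "finite (case_prod Node ` ({t. leaves t = i} \<times> {t. leaves t = n - i}))"
      using less by auto
  qed
  then show ?case using sub finite_subset by blast
qed


definition T :: "nat \<Rightarrow> btree set" where "T k = {t. canonical t \<and> g t \<le> k}"
definition C :: "nat \<Rightarrow> nat \<Rightarrow> btree set" where "C k n = {t. canonical t \<and> leaves t = n \<and> g t \<le> k}"
definition P :: "nat \<Rightarrow> nat \<Rightarrow> (btree \<times> btree) set" where
  "P k n = {(a,b). a \<in> T k \<and> b \<in> T k \<and> leaves a + leaves b = n}"

lemma finite_C: "finite (C k n)"
  by (rule finite_subset[OF _ finite_leaves[of n]]) (auto simp: C_def)

lemma w_card: "w n k = card (C k n)"
proof -
  let ?A = "{t. leaves t = n \<and> gamma t \<le> k}"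
  let ?f = "\<lambda>c. {s. canon s = c}"
  have cls: "iso_rel `` {x} = ?f (canon x)" for x
    by (auto simp: iso_rel_def iso_iff)
  have img: "canon ` ?A = C k n"
  proof
    show "canon ` ?A \<subseteq> C k n"
      by (auto simp: C_def canon_canonical leaves_canon g_canon gamma_g)
    show "C k n \<subseteq> canon ` ?A"
    proof
      fix t assume "t \<in> C k n"
      then have "t = canon t" "t \<in> ?A" by (auto simp: C_def canonical_canon gamma_g)
      then show "t \<in> canon ` ?A" by blast
    qed
  qed
  have q: "?A // iso_rel = ?f ` (C k n)"
    unfolding quotient_def img[symmetric] using cls by auto
  have inj: "inj_on ?f (C k n)"
  proof (rule inj_onI)
    fix x y assume "x \<in> C k n" "y \<in> C k n" "?f x = ?f y"
    then have "canon x = x" by (auto simp: C_def canonical_canon)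
    then have "x \<in> ?f x" by simp
    then have "x \<in> ?f y" using \<open>?f x = ?f y\<close> by simp
    then show "x = y" using \<open>canon x = x\<close> by simp
  qed
  show ?thesis unfolding w_def q using card_image[OF inj] by simp
qed

lemma P_UN: "P k n = (\<Union>i\<in>{0..n}. C k i \<times> C k (n - i))"
  by (auto simp: P_def C_def T_def)

lemma card_P: "card (P k n) = (\<Sum>i=0..n. w i k * w (n - i) k)"
proof -
  have "card (P k n) = (\<Sum>i\<in>{0..n}. card (C k i \<times> C k (n - i)))"
    unfolding P_UN
    apply (rule card_UN_disjoint)
      apply simp
     apply (simp add: finite_C)
    apply (auto simp: C_def)
    done
  then show ?thesis by (simp add: w_card card_cartesian_product)
qed

lemma finite_P: "finite (P k n)"
  unfolding P_UN by (auto simp: finite_C)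

definition D :: "nat \<Rightarrow> nat \<Rightarrow> (btree \<times> btree) set" where
  "D k n = {(a,b) \<in> P k n. a = b}"
definition Lt :: "nat \<Rightarrow> nat \<Rightarrow> (btree \<times> btree) set" where
  "Lt k n = {(a,b) \<in> P k n. to_nat a < to_nat b}"

lemma card_D: "card (D k n) = (if even n then w (n div 2) k else 0)"
proof (cases "even n")
  case True
  have "D k n = (\<lambda>a. (a,a)) ` C k (n div 2)"
    using True by (auto simp: D_def P_def C_def T_def)
  then show ?thesis using True by (simp add: card_image inj_on_def w_card)
next
  case False
  have "D k n = {}" using False by (auto simp: D_def P_def)
  then show ?thesis using False by simp
qed

lemma P_sym: "(a,b) \<in> P k n \<Longrightarrow> (b,a) \<in> P k n"
  by (simp add: P_def add.commute)

lemma card_P_split: "card (P k n) = 2 * card (Lt k n) + card (D k n)"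
proof -
  define Gt where "Gt = {(a,b) \<in> P k n. to_nat b < to_nat a}"
  have tri: "to_nat a < to_nat b \<or> to_nat b < to_nat a \<or> a = b" for a b :: btree
    by (metis linorder_neqE_nat to_nat_split)
  have split: "P k n = Lt k n \<union> Gt \<union> D k n"
  proof (intro equalityI subsetI)
    fix x assume x: "x \<in> P k n"
    obtain a b where ab: "x = (a,b)" by (cases x)
    from tri[of a b] show "x \<in> Lt k n \<union> Gt \<union> D k n"
    proof (elim disjE)
      assume "to_nat a < to_nat b" then show ?thesis using x ab by (simp add: Lt_def)
    next
      assume "to_nat b < to_nat a" then show ?thesis using x ab by (simp add: Gt_def)
    next
      assume "a = b" then show ?thesis using x ab by (simp add: D_def)
    qed
  next
    fix x assume "x \<in> Lt k n \<union> Gt \<union> D k n"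
    then show "x \<in> P k n" by (cases x) (auto simp: Lt_def D_def Gt_def)
  qed
  have s1: "Lt k n \<subseteq> P k n" "Gt \<subseteq> P k n" "D k n \<subseteq> P k n"
    by (auto simp: Lt_def D_def Gt_def)
  have fin: "finite (Lt k n)" "finite Gt" "finite (D k n)"
    using finite_subset[OF s1(1) finite_P] finite_subset[OF s1(2) finite_P] finite_subset[OF s1(3) finite_P]
    by auto
  have swap: "Gt = (\<lambda>(a,b). (b,a)) ` Lt k n"
  proof (intro equalityI subsetI)
    fix x assume x: "x \<in> Gt"
    obtain a b where ab: "x = (a,b)" by (cases x)
    have "(b,a) \<in> Lt k n" using x ab P_sym[of a b k n] by (simp add: Gt_def Lt_def)
    then show "x \<in> (\<lambda>(a,b). (b,a)) ` Lt k n" using ab by (simp add: rev_image_eqI)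
  next
    fix x assume "x \<in> (\<lambda>(a,b). (b,a)) ` Lt k n"
    then obtain a b where "(a,b) \<in> Lt k n" "x = (b,a)" by auto
    then show "x \<in> Gt" using P_sym[of a b k n] by (simp add: Gt_def Lt_def)
  qed
  moreover have "inj_on (\<lambda>(a::btree,b::btree). (b,a)) (Lt k n)"
    by (rule inj_onI) auto
  ultimately have cg: "card Gt = card (Lt k n)"
    using card_image by metis
  have d1: "(Lt k n \<union> Gt) \<inter> D k n = {}"
    by (auto simp: Lt_def Gt_def D_def)
  have d2: "Lt k n \<inter> Gt = {}" by (auto simp: Lt_def Gt_def)
  have "card (P k n) = card (Lt k n \<union> Gt) + card (D k n)"
    unfolding split using fin d1 by (simp add: card_Un_disjoint)
  also have "card (Lt k n \<union> Gt) = card (Lt k n) + card Gt"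
    using fin d2 by (simp add: card_Un_disjoint)
  finally show ?thesis using cg by simp
qed

lemma cat_unique: "canonical s \<Longrightarrow> canonical t \<Longrightarrow> caterpillar s \<Longrightarrow> caterpillar t \<Longrightarrow> leaves s = leaves t \<Longrightarrow> s = t"
proof (induction s arbitrary: t)
  case Leaf
  show ?case
  proof (cases t)
    case (Node c d)
    then have "leaves t \<ge> 2" using leaves_pos[of c] leaves_pos[of d] by simp
    then show ?thesis using Leaf.prems by simp
  qed simp
next
  case (Node a b)
  show ?case
  proof (cases t)
    case Leaf
    then show ?thesis using Node.prems leaves_pos[of a] leaves_pos[of b] by auto
  next
    case (Node c d)
    note N = Node
    have ca: "canonical a" "canonical b" "caterpillar a" "caterpillar b" "to_nat a \<le> to_nat b"
      and cc: "canonical c" "canonical d" "caterpillar c" "caterpillar d" "to_nat c \<le> to_nat d"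
      and ab: "a = Leaf \<or> b = Leaf" and cd: "c = Leaf \<or> d = Leaf"
      and l: "leaves a + leaves b = leaves c + leaves d"
      using Node.prems N by auto
    show ?thesis
    proof -
      { assume "a = Leaf" "c = Leaf"
        then have ?thesis using Node.IH(2)[of d] ca cc l N by auto }
      moreover
      { assume "b = Leaf" "d = Leaf"
        then have ?thesis using Node.IH(1)[of c] ca cc l N by auto }
      moreover
      { assume "a = Leaf" "d = Leaf"
        then have "b = c" using Node.IH(2)[of c] ca cc l by auto
        then have "to_nat b = to_nat Leaf" using ca cc \<open>a = Leaf\<close> \<open>d = Leaf\<close> by auto
        then have ?thesis using \<open>b = c\<close> \<open>a = Leaf\<close> \<open>d = Leaf\<close> N by simp }
      moreover
      { assume "b = Leaf" "c = Leaf"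
        then have "a = d" using Node.IH(1)[of d] ca cc l by auto
        then have "to_nat a = to_nat Leaf" using ca cc \<open>b = Leaf\<close> \<open>c = Leaf\<close> by auto
        then have ?thesis using \<open>a = d\<close> \<open>b = Leaf\<close> \<open>c = Leaf\<close> N by simp }
      ultimately show ?thesis using ab cd by blast
    qed
  qed
qed

fun chain :: "nat \<Rightarrow> btree" where
  "chain 0 = Leaf"
| "chain (Suc m) = Node Leaf (chain m)"

lemma chain_props: "caterpillar (chain m) \<and> leaves (chain m) = Suc m"
  by (induction m) auto

definition G :: "nat \<Rightarrow> nat \<Rightarrow> btree set" where
  "G k n = (\<lambda>(a,b). Node a b) ` (Lt k n \<union> D k n)"

lemma card_G: "card (G k n) = card (Lt k n) + card (D k n)"
proof -
  have fin: "finite (Lt k n)" "finite (D k n)"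
    by (rule finite_subset[OF _ finite_P[of k n]], auto simp: Lt_def D_def)+
  have "inj_on (\<lambda>(a,b). Node a b) (Lt k n \<union> D k n)"
    by (auto simp: inj_on_def)
  then have "card (G k n) = card (Lt k n \<union> D k n)"
    unfolding G_def by (rule card_image)
  also have "\<dots> = card (Lt k n) + card (D k n)"
    by (rule card_Un_disjoint) (use fin in \<open>auto simp: Lt_def D_def\<close>)
  finally show ?thesis .
qed

lemma G_mem: "t \<in> G k n \<longleftrightarrow> (\<exists>a b. t = Node a b \<and> canonical a \<and> canonical b \<and> to_nat a \<le> to_nat b
   \<and> g a \<le> k \<and> g b \<le> k \<and> leaves a + leaves b = n)"
proof
  assume "t \<in> G k n"
  then obtain x where x: "x \<in> Lt k n \<union> D k n" "t = (\<lambda>(a,b). Node a b) x" unfolding G_def by blast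
  obtain a b where ab: "x = (a,b)" by (cases x)
  have "(a,b) \<in> P k n" "to_nat a \<le> to_nat b" using x ab by (auto simp: Lt_def D_def)
  then show "\<exists>a b. t = Node a b \<and> canonical a \<and> canonical b \<and> to_nat a \<le> to_nat b
   \<and> g a \<le> k \<and> g b \<le> k \<and> leaves a + leaves b = n"
    using x ab by (auto simp: P_def T_def)
next
  assume "\<exists>a b. t = Node a b \<and> canonical a \<and> canonical b \<and> to_nat a \<le> to_nat b
   \<and> g a \<le> k \<and> g b \<le> k \<and> leaves a + leaves b = n"
  then obtain a b where ab: "t = Node a b" "canonical a" "canonical b" "to_nat a \<le> to_nat b"
    "g a \<le> k" "g b \<le> k" "leaves a + leaves b = n" by blast
  have P: "(a,b) \<in> P k n" using ab by (simp add: P_def T_def)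
  have "(a,b) \<in> Lt k n \<union> D k n"
  proof (cases "to_nat a < to_nat b")
    case True then show ?thesis using P by (simp add: Lt_def)
  next
    case False
    then have "a = b" using ab(4) by (metis le_neq_implies_less to_nat_split)
    then show ?thesis using P by (simp add: D_def)
  qed
  then show "t \<in> G k n" unfolding G_def using ab(1) by (simp add: rev_image_eqI)
qed

lemma C_G: "2 \<le> n \<Longrightarrow> C k n = G k n - {t. caterpillar t \<and> k < n}"
proof
  assume n: "2 \<le> n"
  show "C k n \<subseteq> G k n - {t. caterpillar t \<and> k < n}"
  proof
    fix t assume t: "t \<in> C k n"
    then obtain a b where tab: "t = Node a b" using n by (cases t) (auto simp: C_def)
    have "caterpillar t \<Longrightarrow> n \<le> k" using t g_cat[of t] by (auto simp: C_def)
    then show "t \<in> G k n - {t. caterpillar t \<and> k < n}"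
      using t tab by (auto simp: C_def G_mem simp del: caterpillar.simps)
  qed
  show "G k n - {t. caterpillar t \<and> k < n} \<subseteq> C k n"
  proof
    fix t assume t: "t \<in> G k n - {t. caterpillar t \<and> k < n}"
    then obtain a b where tab: "t = Node a b" "canonical a" "canonical b" "to_nat a \<le> to_nat b"
      "g a \<le> k" "g b \<le> k" "leaves a + leaves b = n" by (auto simp: G_mem)
    have "\<not> (caterpillar t \<and> k < n)" using t by auto
    then show "t \<in> C k n" using tab by (auto simp: C_def simp del: caterpillar.simps)
  qed
qed

lemma G_E: assumes "t \<in> G k n"
  obtains a b where "t = Node a b" "canonical a" "canonical b" "to_nat a \<le> to_nat b"
    "g a \<le> k" "g b \<le> k" "leaves a + leaves b = n"
  using G_mem[THEN iffD1, OF assms] by blast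

lemma card_bad: assumes "1 \<le> k" "2 \<le> n"
  shows "card (G k n \<inter> {t. caterpillar t \<and> k < n}) = (if n = k + 1 then 1 else 0)"
proof (cases "n = k + 1")
  case True
  let ?c = "canon (chain k)"
  have cc: "canonical ?c" "caterpillar ?c" "leaves ?c = k + 1"
    using chain_props[of k] canon_canonical[of "chain k"] caterpillar_canon[of "chain k"]
      leaves_canon[of "chain k"] by auto
  have "G k n \<inter> {t. caterpillar t \<and> k < n} = {?c}"
  proof
    show "G k n \<inter> {t. caterpillar t \<and> k < n} \<subseteq> {?c}"
    proof
      fix t assume t: "t \<in> G k n \<inter> {t. caterpillar t \<and> k < n}"
      then have "t \<in> G k n" "caterpillar t" by auto
      then obtain a b where tab: "t = Node a b" "canonical a" "canonical b" "to_nat a \<le> to_nat b"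
        "g a \<le> k" "g b \<le> k" "leaves a + leaves b = n" using G_E[OF \<open>t \<in> G k n\<close>] by blast
      then have "canonical t" "leaves t = k + 1" using True by auto
      then have "t = ?c" using cat_unique[of t ?c] cc \<open>caterpillar t\<close> by simp
      then show "t \<in> {?c}" by simp
    qed
    show "{?c} \<subseteq> G k n \<inter> {t. caterpillar t \<and> k < n}"
    proof -
      obtain a b where ab: "?c = Node a b"
        using cc assms by (cases ?c) auto
      then have abp: "canonical a" "canonical b" "to_nat a \<le> to_nat b" "caterpillar a" "caterpillar b"
        "leaves a + leaves b = k + 1"
        using cc by auto
      moreover have "g a \<le> k" "g b \<le> k"
        using abp g_cat[of a] g_cat[of b] leaves_pos[of a] leaves_pos[of b] by auto
      ultimately have "?c \<in> G k n" unfolding G_mem using ab True by blast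
      moreover have "caterpillar ?c \<and> k < n" using cc True by simp
      ultimately show ?thesis by blast
    qed
  qed
  then show ?thesis using True by simp
next
  case False
  have "G k n \<inter> {t. caterpillar t \<and> k < n} = {}"
  proof (rule ccontr)
    assume "G k n \<inter> {t. caterpillar t \<and> k < n} \<noteq> {}"
    then obtain t where "t \<in> G k n" "caterpillar t" "k < n" by auto
    from \<open>t \<in> G k n\<close> obtain a b where tab: "t = Node a b" "canonical a" "canonical b" "to_nat a \<le> to_nat b"
        "g a \<le> k" "g b \<le> k" "leaves a + leaves b = n" by (rule G_E)
    then have "a = Leaf \<or> b = Leaf" "caterpillar a" "caterpillar b" using \<open>caterpillar t\<close> by auto
    then have "n \<le> k + 1" using tab g_cat[of a] g_cat[of b] by auto
    then show False using False \<open>k < n\<close> by simp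
  qed
  then show ?thesis using False by simp
qed

lemma card_C_rec: assumes "1 \<le> k" "2 \<le> n"
  shows "card (C k n) + (if n = k + 1 then 1 else 0) = card (Lt k n) + card (D k n)"
proof -
  have s1: "Lt k n \<subseteq> P k n" "D k n \<subseteq> P k n"
    by (auto simp: Lt_def D_def)
  have "finite (Lt k n \<union> D k n)"
    using finite_subset[OF s1(1) finite_P] finite_subset[OF s1(2) finite_P] by simp
  then have fin: "finite (G k n)" unfolding G_def by (rule finite_imageI)
  have "C k n = G k n - (G k n \<inter> {t. caterpillar t \<and> k < n})"
    using C_G[OF assms(2)] by blast
  then have "card (C k n) = card (G k n) - card (G k n \<inter> {t. caterpillar t \<and> k < n})"
    using fin by (simp add: card_Diff_subset)
  moreover have "card (G k n \<inter> {t. caterpillar t \<and> k < n}) \<le> card (G k n)"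
    by (rule card_mono) (use fin in auto)
  ultimately show ?thesis using card_bad[OF assms] card_G[of k n] by simp
qed


lemma w0: "w 0 k = 0"
proof -
  have "C k 0 = {}"
  proof (rule ccontr)
    assume "C k 0 \<noteq> {}"
    then obtain t where "t \<in> C k 0" by blast
    then have "leaves t = 0" by (simp add: C_def)
    with leaves_pos[of t] show False by simp
  qed
  then show ?thesis by (simp add: w_card)
qed

lemma leaves_one: "leaves t = 1 \<longleftrightarrow> t = Leaf"
proof (cases t)
  case (Node a b)
  then show ?thesis using leaves_pos[of a] leaves_pos[of b] by simp
qed simp

lemma w1: "1 \<le> k \<Longrightarrow> w 1 k = 1"
proof -
  assume "1 \<le> k"
  have "C k 1 = {Leaf}"
  proof
    show "C k 1 \<subseteq> {Leaf}"
    proof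
      fix t assume "t \<in> C k 1"
      then have "leaves t = 1" by (simp add: C_def)
      then show "t \<in> {Leaf}" using leaves_one by blast
    qed
    show "{Leaf} \<subseteq> C k 1" using \<open>1 \<le> k\<close> by (simp add: C_def)
  qed
  then show ?thesis by (simp add: w_card)
qed

lemma P_small: "n < 2 \<Longrightarrow> P k n = {}"
proof (rule ccontr)
  assume "n < 2" "P k n \<noteq> {}"
  then obtain x where "x \<in> P k n" by blast
  then obtain a b where "(a,b) \<in> P k n" by (cases x) auto
  then have "leaves a + leaves b = n" by (simp add: P_def)
  with leaves_pos[of a] leaves_pos[of b] \<open>n < 2\<close> show False by simp
qed

lemma D_small: "n < 2 \<Longrightarrow> D k n = {}"
  using P_small[of n k] by (simp add: D_def)

lemma coeff_eq: assumes "1 \<le> k"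
  shows "real (w n k) = (if n = 1 then 1 else 0) + real (card (P k n)) / 2 + real (card (D k n)) / 2
     - (if n = k + 1 then 1 else 0)"
proof (cases "n < 2")
  case True
  then have "n = 0 \<or> n = 1" by auto
  then show ?thesis
  proof
    assume "n = 0" then show ?thesis using P_small[of n k] D_small[of n k] w0[of k] by simp
  next
    assume "n = 1" then show ?thesis using P_small[of n k] D_small[of n k] w1[OF assms] assms by simp
  qed
next
  case False
  then have n: "2 \<le> n" by simp
  have nat: "card (C k n) + (if n = k + 1 then 1 else 0) = card (Lt k n) + card (D k n)"
    by (rule card_C_rec[OF assms n])
  have r: "real (card (C k n)) + (if n = k + 1 then 1 else 0) = real (card (Lt k n)) + real (card (D k n))"
  proof (cases "n = k + 1")
    case True then show ?thesis using nat by simp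
  next
    case False then show ?thesis using nat by simp
  qed
  have p: "real (card (P k n)) = 2 * real (card (Lt k n)) + real (card (D k n))"
    using card_P_split[of k n] by simp
  show ?thesis
  proof (cases "n = k + 1")
    case True
    then have "real (card (C k n)) + 1 = real (card (Lt k n)) + real (card (D k n))" using r by simp
    moreover have "(if n = 1 then 1 else 0) = (0::real)" using n by simp
    moreover have "(if n = k + 1 then 1 else 0) = (1::real)" using True by simp
    ultimately show ?thesis using p unfolding w_card by linarith
  next
    case False
    then have "real (card (C k n)) = real (card (Lt k n)) + real (card (D k n))" using r by simp
    moreover have "(if n = 1 then 1 else 0) = (0::real)" using n by simp
    moreover have "(if n = k + 1 then 1 else 0) = (0::real)" using False by simp
    ultimately show ?thesis using p unfolding w_card by linarith
  qed
qed

lemma fps_div2_nth: "fps_nth ((f :: real fps) / 2) n = fps_nth f n / 2"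
proof -
  have two: "(2::real fps) = fps_const 2" by (rule fps_numeral_fps_const)
  have eq: "f / 2 = fps_const (inverse 2) * f"
    by (subst two) (rule divide_fps_const)
  show ?thesis unfolding eq fps_mult_left_const_nth by (simp add: inverse_eq_divide)
qed

lemma compose_X2: "fps_nth ((f :: real fps) oo fps_X ^ 2) n = (if even n then fps_nth f (n div 2) else 0)"
proof -
  have "fps_nth (f oo fps_X ^ 2) n = (\<Sum>i\<in>{0..n}. if i = n div 2 then (if even n then fps_nth f i else 0) else 0)"
    unfolding fps_compose_nth
  proof (intro sum.cong refl)
    fix i assume "i \<in> {0..n}"
    have pw: "(fps_X ^ 2) ^ i = (fps_X ^ (2 * i) :: real fps)" by (simp add: power_mult)
    have iff: "(n = 2 * i) = (i = n div 2 \<and> even n)" by auto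
    show "fps_nth f i * fps_nth ((fps_X ^ 2) ^ i) n = (if i = n div 2 then (if even n then fps_nth f i else 0) else 0)"
      unfolding pw fps_X_power_nth iff by simp
  qed
  also have "\<dots> = (if even n then fps_nth f (n div 2) else 0)"
    by (simp add: sum.delta)
  finally show ?thesis .
qed

lemma W_sq_nth: "fps_nth ((W k)\<^sup>2) n = real (card (P k n))"
  unfolding power2_eq_square fps_mult_nth W_def fps_nth_Abs_fps card_P of_nat_sum of_nat_mult ..

lemma W_comp_nth: "fps_nth (fps_compose (W k) (fps_X ^ 2)) n = real (card (D k n))"
  unfolding compose_X2 card_D W_def fps_nth_Abs_fps by simp

lemma W_nth: "fps_nth (W k) n = real (w n k)"
  unfolding W_def fps_nth_Abs_fps ..

lemma eq1: assumes "1 \<le> k"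
  shows "W k = fps_X + (W k)\<^sup>2 / 2 + fps_compose (W k) (fps_X ^ 2) / 2 - fps_X ^ (k + 1)"
proof (rule fps_ext)
  fix n
  show "fps_nth (W k) n = fps_nth (fps_X + (W k)\<^sup>2 / 2 + fps_compose (W k) (fps_X ^ 2) / 2 - fps_X ^ (k + 1)) n"
    unfolding fps_add_nth fps_sub_nth fps_div2_nth W_sq_nth W_comp_nth fps_X_nth fps_X_power_nth W_nth
    using coeff_eq[OF assms, of n] .
qed

lemma two_nth: "fps_nth (2 * (q :: real fps)) n = 2 * fps_nth q n"
proof -
  have two: "(2::real fps) = fps_const 2" by (rule fps_numeral_fps_const)
  show ?thesis by (subst two) (rule fps_mult_left_const_nth)
qed

lemma twice_half: "2 * ((q :: real fps) / 2) = q"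
proof (rule fps_ext)
  fix n show "fps_nth (2 * (q / 2)) n = fps_nth q n"
    unfolding two_nth fps_div2_nth by simp
qed

theorem mainTheorem12:
  fixes k :: nat
  assumes "k \<ge> 1"
  shows "W k = fps_X + (W k)\<^sup>2 / 2 + fps_compose (W k) (fps_X ^ 2) / 2 - fps_X ^ (k + 1)
         \<and> W k = 1 - fps_radical (\<lambda>n x. root n x) 2 (1 - 2 * phi k)"
proof
  have e1: "W k = fps_X + (W k)\<^sup>2 / 2 + fps_compose (W k) (fps_X ^ 2) / 2 - fps_X ^ (k + 1)"
    using eq1[OF assms] .
  then show "W k = fps_X + (W k)\<^sup>2 / 2 + fps_compose (W k) (fps_X ^ 2) / 2 - fps_X ^ (k + 1)" .
  have W0: "fps_nth (W k) 0 = 0" by (simp add: W_nth w0)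
  define h where "h = (W k)\<^sup>2 / 2"
  have e2: "W k = phi k + h"
  proof -
    have "fps_X + (W k)\<^sup>2 / 2 + fps_compose (W k) (fps_X ^ 2) / 2 - fps_X ^ (k + 1) = phi k + h"
      unfolding phi_def h_def by (simp add: algebra_simps)
    with e1 show ?thesis by (rule trans)
  qed
  have h2: "(W k)\<^sup>2 = 2 * h" unfolding h_def by (rule twice_half[symmetric])
  have sq: "(1 - W k) ^ Suc 1 = 1 - 2 * phi k"
  proof -
    have "(1 - W k) ^ Suc 1 = 1 - 2 * W k + (W k)\<^sup>2"
      by (simp add: power2_eq_square algebra_simps)
    also have "\<dots> = 1 - 2 * (phi k + h) + 2 * h" using e2 h2 by simp
    also have "\<dots> = 1 - 2 * phi k" by (simp add: algebra_simps)
    finally show ?thesis .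
  qed
  have phi0: "fps_nth (phi k) 0 = 0"
    unfolding phi_def fps_add_nth fps_sub_nth fps_div2_nth fps_compose_nth_0 W0 by simp
  have b0: "fps_nth (1 - 2 * phi k) 0 = 1"
    unfolding fps_sub_nth two_nth phi0 by simp
  have a0: "fps_nth (1 - W k) 0 = 1"
    unfolding fps_sub_nth W0 by simp
  have R: "1 - W k = fps_radical (\<lambda>n x. root n x) (Suc 1) (1 - 2 * phi k)"
    using radical_unique[where r="\<lambda>n x. root n x" and k=1 and b="1 - 2 * phi k" and a="1 - W k"]
      sq b0 a0 by simp
  have "W k = 1 - (1 - W k)" by simp
  also have "\<dots> = 1 - fps_radical (\<lambda>n x. root n x) (Suc 1) (1 - 2 * phi k)" by (simp only: R)
  also have "Suc 1 = 2" by simp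
  finally show "W k = 1 - fps_radical (\<lambda>n x. root n x) 2 (1 - 2 * phi k)" .
qed

end
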